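(* Let $h_s$ be a scaling filter of length $M$ whose associated scaling function $\phi_h\in L^2(\mathbb R)$ is bounded. Then for every integer $\mathcal L\ge 1$ and every $f\in\ell^1(\mathbb Z)$, \[ \bigl\lVert p_s^{(\mathcal L)} W_h^{(\mathcal L)} f \bigr\rVert_2 \le M\, 2^{-(\mathcal L-1)/2}\, \lVert \phi_h\rVert_\infty\, \lVert f\rVert_1 . \]
   Context: Fourier convention: for $f\in\ell^2(\mathbb Z)$, $\hat f(k)=\sum_n f[n]e^{-\mathrm i nk}$, a $2\pi$-periodic function; for a filter $h$ we write $h(k)$ for its Fourier transform. For a bounded measurable $2\pi$-periodic function $\theta$, $m(\theta)$ denotes the Fourier multiplier on $\ell^2(\mathbb Z)$, $(m(\theta)f)^\wedge(k)=\theta(k)\hat f(k)$; $m(h)$ is the multiplier by $h(k)$, i.e. convolution with $h$. The upsampling operator $\uparrow$ on $\ell^2(\mathbb Z)$ is defined by $\delta_n\mapsto\delta_{2n}$. A scaling filter of length $M$ is a sequence $h_s$ supported on $M$ consecutive integers with $|h_s(k)|^2+|h_s(k+\pi)|^2=2$ for all $k$, $h_s(0)=\sqrt2$, such that the scaling function $\phi_h\in L^2(\mathbb R)$ (the solution of $\phi_h(x)=\sqrt2\sum_n h_s[n]\phi_h(2x-n)$ with $\int\phi_h=1$) has orthonormal integer translates, i.e. generates an orthonormal multiresolution analysis. The associated wavelet filter is $h_w(k)=e^{\mathrm ik}\,\overline{h_s(k+\pi)}$. The wavelet transform truncated at level $\mathcal L$ is the unitary $W_h^{(\mathcal L)}:\ell^2(\mathbb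 Z)\to\ell^2(\mathbb Z)\otimes\mathbb C^{\mathcal L+1}$ (orthonormal basis $|1\rangle,\dots,|\mathcal L+1\rangle$ of $\mathbb C^{\mathcal L+1}$) whose adjoint is given by $W_h^{(\mathcal L)\dagger}(I\otimes|\ell\rangle)=[m(h_s)\uparrow]^{\ell-1}m(h_w)\uparrow$ for $\ell=1,\dots,\mathcal L$ (wavelet outputs) and $W_h^{(\mathcal L)\dagger}(I\otimes|\mathcal L+1\rangle)=[m(h_s)\uparrow]^{\mathcal L}$ (scaling output). $p_w^{(\mathcal L)}=I\otimes\sum_{\ell=1}^{\mathcal L}|\ell\rangle\langle\ell|$ and $p_s^{(\mathcal L)}=I\otimes|\mathcal L+1\rangle\langle\mathcal L+1|$ are the projections onto the wavelet outputs and the scaling output. *)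

theory Defs
  imports "HOL-Analysis.Analysis" "HOL-Probability.Essential_Supremum"
begin

definition filter_ft :: "(int \<Rightarrow> complex) \<Rightarrow> real \<Rightarrow> complex" where
  "filter_ft h k = (\<Sum>\<^sub>\<infinity>n. h n * cis (- (of_int n * k)))"

definition supported_len :: "(int \<Rightarrow> complex) \<Rightarrow> nat \<Rightarrow> bool" where
  "supported_len h M \<longleftrightarrow> (\<exists>a::int. \<forall>n. h n \<noteq> 0 \<longrightarrow> a \<le> n \<and> n < a + int M)"

definition is_scaling_function :: "(int \<Rightarrow> complex) \<Rightarrow> (real \<Rightarrow> complex) \<Rightarrow> bool" where
  "is_scaling_function h \<phi> \<longleftrightarrow>
     integrable lborel (\<lambda>x. (cmod (\<phi> x))\<^sup>2) \<and>
     integrable lborel \<phi> \<and> (\<integral>x. \<phi> x \<partial>lborel) = 1 \<and>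
     (AE x in lborel. \<phi> x = of_real (sqrt 2) * (\<Sum>\<^sub>\<infinity>n. h n * \<phi> (2 * x - of_int n))) \<and>
     (\<forall>m n :: int. (\<integral>x. \<phi> (x - of_int m) * cnj (\<phi> (x - of_int n)) \<partial>lborel)
                     = (if m = n then 1 else 0))"

definition scaling_filter :: "(int \<Rightarrow> complex) \<Rightarrow> nat \<Rightarrow> (real \<Rightarrow> complex) \<Rightarrow> bool" where
  "scaling_filter h M \<phi> \<longleftrightarrow>
     supported_len h M \<and>
     (\<forall>k. (cmod (filter_ft h k))\<^sup>2 + (cmod (filter_ft h (k + pi)))\<^sup>2 = 2) \<and>
     filter_ft h 0 = of_real (sqrt 2) \<and>
     is_scaling_function h \<phi>"

definition conv :: "(int \<Rightarrow> complex) \<Rightarrow> (int \<Rightarrow> complex) \<Rightarrow> int \<Rightarrow> complex" where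
  "conv h f n = (\<Sum>\<^sub>\<infinity>k. h k * f (n - k))"

definition upsample :: "(int \<Rightarrow> complex) \<Rightarrow> int \<Rightarrow> complex" where
  "upsample f n = (if even n then f (n div 2) else 0)"

definition downsample :: "(int \<Rightarrow> complex) \<Rightarrow> int \<Rightarrow> complex" where
  "downsample f n = f (2 * n)"

text \<open>m(h)^\<dagger> = m(conj h) = convolution with n \<mapsto> conj (h (-n)).\<close>
definition adj_filter :: "(int \<Rightarrow> complex) \<Rightarrow> int \<Rightarrow> complex" where
  "adj_filter h n = cnj (h (- n))"

text \<open>Scaling output of W_h^(L) f, i.e. the |L+1> component of W f, which is
  ([m(h_s) up]^L)^\<dagger> f = (down m(h_s)^\<dagger>)^L f.\<close>
definition scaling_output :: "(int \<Rightarrow> complex) \<Rightarrow> nat \<Rightarrow> (int \<Rightarrow> complex) \<Rightarrow> int \<Rightarrow> complex" where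
  "scaling_output h L f = ((\<lambda>g. downsample (conv (adj_filter h) g)) ^^ L) f"

definition l2norm :: "(int \<Rightarrow> complex) \<Rightarrow> real" where
  "l2norm g = sqrt (\<Sum>\<^sub>\<infinity>n. (cmod (g n))\<^sup>2)"

definition l1norm :: "(int \<Rightarrow> complex) \<Rightarrow> real" where
  "l1norm g = (\<Sum>\<^sub>\<infinity>n. cmod (g n))"

definition sup_norm_ess :: "(real \<Rightarrow> complex) \<Rightarrow> ereal" where
  "sup_norm_ess \<phi> = esssup lborel (\<lambda>x. ereal (cmod (\<phi> x)))"

end

theory Submission
  imports Defs
begin


lemma cnj_meas[measurable]: "(f::_\<Rightarrow>complex) \<in> borel_measurable M \<Longrightarrow> (\<lambda>x. cnj (f x)) \<in> borel_measurable M"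
  using measurable_compose[of f M borel cnj borel] borel_measurable_continuous_onI[OF continuous_on_cnj[OF continuous_on_id]]
  by (simp add: id_def)

lemma aux_abs: fixes X Y y a b :: real shows "2 * (\<bar>y\<bar> + \<bar>a\<bar> + \<bar>b\<bar>) < X \<Longrightarrow> X \<le> Y \<Longrightarrow>
  \<not> (y < a - Y / 2 \<or> b + Y / 2 < y)"
  by (simp add: abs_if split: if_splits)

definition TT :: "int \<Rightarrow> int \<Rightarrow> nat \<Rightarrow> real set" where
  "TT a b L = {y. y < of_int a - 2^L/2 \<or> of_int b + 2^L/2 < y}"

lemma TT_meas[measurable]: "TT a b L \<in> sets borel"
  unfolding TT_def by measurable

definition SL :: "int \<Rightarrow> int \<Rightarrow> nat \<Rightarrow> int set" where
  "SL a b L = {a * (2^L - 1) .. b * (2^L - 1)}"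

fun casc :: "(int \<Rightarrow> complex) \<Rightarrow> int \<Rightarrow> int \<Rightarrow> nat \<Rightarrow> int \<Rightarrow> complex" where
  "casc h a b 0 p = (if p = 0 then 1 else 0)"
| "casc h a b (Suc L) p = (\<Sum>q\<in>SL a b L. h (p - 2*q) * casc h a b L q)"

lemma finite_SL[simp]: "finite (SL a b L)" by (simp add: SL_def)

lemma casc_step:
  fixes Y :: "int \<Rightarrow> 'c::comm_ring_1" and h :: "int \<Rightarrow> 'c"
  assumes hs: "\<And>n. h n \<noteq> 0 \<Longrightarrow> a \<le> n \<and> n \<le> b"
  shows "(\<Sum>j\<in>SL a b L. \<Sum>i\<in>{a..b}. H j * h i * Y (2*j+i))
       = (\<Sum>p\<in>SL a b (Suc L). (\<Sum>q\<in>SL a b L. h (p - 2*q) * H q) * Y p)"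
proof -
  have "(\<Sum>p\<in>SL a b (Suc L). (\<Sum>q\<in>SL a b L. h (p - 2*q) * H q) * Y p)
      = (\<Sum>q\<in>SL a b L. \<Sum>p\<in>SL a b (Suc L). h (p - 2*q) * H q * Y p)"
    by (simp add: sum_distrib_right sum.swap[of _ "SL a b (Suc L)"])
  also have "\<dots> = (\<Sum>j\<in>SL a b L. \<Sum>i\<in>{a..b}. H j * h i * Y (2*j+i))"
  proof (rule sum.cong[OF refl])
    fix q assume q: "q \<in> SL a b L"
    have sub: "(\<lambda>i. 2*q+i) ` {a..b} \<subseteq> SL a b (Suc L)"
    proof
      fix p assume "p \<in> (\<lambda>i. 2*q+i) ` {a..b}"
      then obtain i where i0: "i \<in> {a..b}" "p = 2*q+i" by blast
      then have i: "a \<le> i" "i \<le> b" "p = 2*q+i" by auto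
      from q have "a * (2^L - 1) \<le> q" "q \<le> b * (2^L - 1)" by (auto simp: SL_def)
      with i show "p \<in> SL a b (Suc L)" by (auto simp: SL_def algebra_simps)
    qed
    have "(\<Sum>p\<in>SL a b (Suc L). h (p - 2*q) * H q * Y p) = (\<Sum>p\<in>(\<lambda>i. 2*q+i) ` {a..b}. h (p - 2*q) * H q * Y p)"
      apply (rule sum.mono_neutral_right)
      subgoal by simp
      subgoal by (rule sub)
      subgoal proof (clarify)
        fix p assume "p \<in> SL a b (Suc L)" "p \<notin> (\<lambda>i. 2*q+i)`{a..b}"
        then have "\<not>(a \<le> p-2*q \<and> p - 2*q \<le> b)" by (force simp: image_iff)
        hence "h(p-2*q) = 0" using hs by blast
        thus "h (p - 2*q) * H q * Y p = 0" by simp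
      qed
      done
    also have "\<dots> = (\<Sum>i\<in>{a..b}. H q * h i * Y (2*q+i))"
      by (subst sum.reindex) (auto simp: inj_on_def mult.commute)
    finally show "(\<Sum>p\<in>SL a b (Suc L). h (p - 2*q) * H q * Y p) = (\<Sum>i\<in>{a..b}. H q * h i * Y (2*q+i))" .
  qed
  finally show ?thesis by simp
qed

lemma F_eq:
  assumes hs: "\<And>n. h n \<noteq> 0 \<Longrightarrow> a \<le> n \<and> n \<le> b"
  shows "downsample (conv (adj_filter h) g) n = (\<Sum>i\<in>{a..b}. cnj (h i) * g (2*n + i))"
proof -
  have hz: "\<And>n. \<not> (a \<le> n \<and> n \<le> b) \<Longrightarrow> h n = 0" using hs by blast
  have "conv (adj_filter h) g (2*n) = infsum (\<lambda>k. cnj (h (-k)) * g (2*n - k)) (uminus ` {a..b})"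
    unfolding conv_def adj_filter_def
    apply (rule infsum_cong_neutral)
    subgoal for x using hz[of "-x"] by (auto simp: image_iff)
    subgoal for x using hz[of "-x"] by (auto simp: image_iff)
    by simp
  also have "\<dots> = sum (\<lambda>k. cnj (h (-k)) * g (2*n - k)) (uminus ` {a..b})"
    by (rule infsum_finite) simp
  also have "\<dots> = (\<Sum>i\<in>{a..b}. cnj (h i) * g (2*n + i))"
    by (subst sum.reindex) (auto simp: inj_on_def)
  finally show ?thesis by (simp add: downsample_def)
qed

lemma out_eq:
  assumes hs: "\<And>n. h n \<noteq> 0 \<Longrightarrow> a \<le> n \<and> n \<le> b"
  shows "scaling_output h L g n = (\<Sum>q\<in>SL a b L. g (2^L*n + q) * cnj (casc h a b L q))"
proof (induction L arbitrary: g n)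
  case 0
  then show ?case by (simp add: scaling_output_def SL_def)
next
  case (Suc L)
  have "scaling_output h (Suc L) g n = scaling_output h L (\<lambda>m. downsample (conv (adj_filter h) g) m) n"
    unfolding scaling_output_def by (simp only: funpow_Suc_right o_apply)
  also have "\<dots> = (\<Sum>q\<in>SL a b L. (\<Sum>i\<in>{a..b}. cnj (h i) * g (2*(2^L*n + q) + i)) * cnj (casc h a b L q))"
    by (simp add: Suc.IH F_eq[OF hs])
  also have "\<dots> = cnj (\<Sum>j\<in>SL a b L. \<Sum>i\<in>{a..b}. casc h a b L j * h i * (\<lambda>p. cnj (g (2^Suc L*n + p))) (2*j+i))"
    by (simp add: sum_distrib_left sum_distrib_right mult.assoc mult.left_commute algebra_simps)
  also have "\<dots> = cnj (\<Sum>p\<in>SL a b (Suc L). (\<Sum>q\<in>SL a b L. h (p-2*q) * casc h a b L q) * (\<lambda>p. cnj (g (2^Suc L*n + p))) p)"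
    by (rule arg_cong[where f=cnj], rule casc_step[OF hs])
  also have "\<dots> = cnj (\<Sum>p\<in>SL a b (Suc L). casc h a b (Suc L) p * cnj (g (2^Suc L*n + p)))"
    by simp
  also have "\<dots> = (\<Sum>q\<in>SL a b (Suc L). g (2^Suc L*n + q) * cnj (casc h a b (Suc L) q))"
    unfolding cnj_sum complex_cnj_mult complex_cnj_cnj by (simp only: mult.commute)
  finally show ?case .
qed



context
  fixes \<phi> :: "real \<Rightarrow> complex" and h :: "int \<Rightarrow> complex" and a b :: int and B :: real
  assumes hs: "\<And>n. h n \<noteq> 0 \<Longrightarrow> a \<le> n \<and> n \<le> b"
  and L2: "integrable lborel (\<lambda>x. (cmod (\<phi> x))\<^sup>2)"
  and L1: "integrable lborel \<phi>"
  and refine: "AE x in lborel. \<phi> x = of_real (sqrt 2) * (\<Sum>\<^sub>\<infinity>n. h n * \<phi> (2 * x - of_int n))"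
  and ortho: "\<forall>m n :: int. (\<integral>x. \<phi> (x - of_int m) * cnj (\<phi> (x - of_int n)) \<partial>lborel)
                     = (if m = n then 1 else 0)"
  and bnd: "AE x in lborel. cmod (\<phi> x) \<le> B"
  and B0: "B \<ge> 0" and ab: "a \<le> b"
begin

lemma phi_meas[measurable]: "\<phi> \<in> borel_measurable borel"
  using borel_measurable_integrable[OF L1] by simp

lemma refine_fin: "AE x in lborel. \<phi> x = of_real (sqrt 2) * (\<Sum>i\<in>{a..b}. h i * \<phi> (2 * x - of_int i))"
  using refine
proof eventually_elim
  case (elim x)
  have hz: "\<And>n. \<not> (a \<le> n \<and> n \<le> b) \<Longrightarrow> h n = 0" using hs by blast
  have "(\<Sum>\<^sub>\<infinity>n. h n * \<phi> (2 * x - of_int n)) = infsum (\<lambda>n. h n * \<phi> (2 * x - of_int n)) {a..b}"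
    by (rule infsum_cong_neutral) (use hz in auto)
  then show ?case using elim by simp
qed

lemma cascade: "AE x in lborel. \<phi> x = of_real (sqrt 2) ^ L * (\<Sum>j\<in>SL a b L. casc h a b L j * \<phi> (2^L * x - of_int j))"
proof (induction L)
  case 0
  then show ?case by (simp add: SL_def)
next
  case (Suc L)
  have "\<forall>j\<in>SL a b L. AE x in lborel. \<phi> (- of_int j + 2^L * x) = of_real (sqrt 2) * (\<Sum>i\<in>{a..b}. h i * \<phi> (2 * (- of_int j + 2^L * x) - of_int i))"
  proof
    fix j
    show "AE x in lborel. \<phi> (- of_int j + 2^L * x) = of_real (sqrt 2) * (\<Sum>i\<in>{a..b}. h i * \<phi> (2 * (- of_int j + 2^L * x) - of_int i))"
      by (rule AE_borel_affine[where P="\<lambda>y. \<phi> y = of_real (sqrt 2) * (\<Sum>i\<in>{a..b}. h i * \<phi> (2 * y - of_int i))", OF _ _ refine_fin]) auto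
  qed
  then have "AE x in lborel. \<forall>j\<in>SL a b L. \<phi> (- of_int j + 2^L * x) = of_real (sqrt 2) * (\<Sum>i\<in>{a..b}. h i * \<phi> (2 * (- of_int j + 2^L * x) - of_int i))"
    by (simp add: AE_finite_all)
  with Suc show ?case
  proof eventually_elim
    case (elim x)
    have "\<phi> x = of_real (sqrt 2) ^ L * (\<Sum>j\<in>SL a b L. casc h a b L j * (of_real (sqrt 2) * (\<Sum>i\<in>{a..b}. h i * \<phi> (2^Suc L * x - of_int (2*j+i)))))"
      using elim by (simp add: algebra_simps)
    also have "\<dots> = of_real (sqrt 2) ^ Suc L * (\<Sum>j\<in>SL a b L. \<Sum>i\<in>{a..b}. casc h a b L j * h i * (\<lambda>p. \<phi> (2^Suc L * x - of_int p)) (2*j+i))"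
      by (simp add: sum_distrib_left mult.assoc mult.left_commute)
    also have "\<dots> = of_real (sqrt 2) ^ Suc L * (\<Sum>p\<in>SL a b (Suc L). casc h a b (Suc L) p * \<phi> (2^Suc L * x - of_int p))"
      using casc_step[OF hs, where L=L and H="casc h a b L" and Y="\<lambda>p. \<phi> (2^Suc L * x - of_int p)"] by simp
    finally show ?case .
  qed
qed

lemma affine_integrable:
  fixes c t :: real assumes "c \<noteq> 0"
  shows "integrable lborel (\<lambda>x. \<phi> (c*x - t))" "integrable lborel (\<lambda>x. (cmod (\<phi> (c*x - t)))\<^sup>2)"
    "integrable lborel (\<lambda>x. cmod (\<phi> (c*x - t)))"
proof -
  show "integrable lborel (\<lambda>x. \<phi> (c*x - t))"
    using lborel_integrable_real_affine[OF L1 assms, of "-t"] by (simp add: algebra_simps)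
  show "integrable lborel (\<lambda>x. (cmod (\<phi> (c*x - t)))\<^sup>2)"
    using lborel_integrable_real_affine[OF L2 assms, of "-t"] by (simp add: algebra_simps)
  then show "integrable lborel (\<lambda>x. cmod (\<phi> (c*x - t)))"
    using integrable_norm[OF \<open>integrable lborel (\<lambda>x. \<phi> (c*x - t))\<close>] by simp
qed

lemma prod_integrable:
  fixes c1 c2 t1 t2 :: real assumes "c1 \<noteq> 0" "c2 \<noteq> 0"
  shows "integrable lborel (\<lambda>x. \<phi> (c1*x - t1) * cnj (\<phi> (c2*x - t2)))"
proof (rule Bochner_Integration.integrable_bound)
  show "integrable lborel (\<lambda>x. (cmod (\<phi> (c1*x - t1)))\<^sup>2 + (cmod (\<phi> (c2*x - t2)))\<^sup>2)"
    using affine_integrable[OF assms(1)] affine_integrable[OF assms(2)] by auto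
  show "(\<lambda>x. \<phi> (c1*x - t1) * cnj (\<phi> (c2*x - t2))) \<in> borel_measurable lborel" by measurable
  show "AE x in lborel. norm (\<phi> (c1*x - t1) * cnj (\<phi> (c2*x - t2))) \<le> norm ((cmod (\<phi> (c1*x - t1)))\<^sup>2 + (cmod (\<phi> (c2*x - t2)))\<^sup>2)"
  proof (rule AE_I2)
    fix x
    have "cmod (\<phi> (c1*x - t1)) * cmod (\<phi> (c2*x - t2)) \<le> (cmod (\<phi> (c1*x - t1)))\<^sup>2 + (cmod (\<phi> (c2*x - t2)))\<^sup>2"
      by (smt (verit) norm_ge_zero power2_eq_square mult_mono sum_squares_ge_zero zero_le_square
           arith_geo_mean_sqrt)
    then show "norm (\<phi> (c1*x - t1) * cnj (\<phi> (c2*x - t2))) \<le> norm ((cmod (\<phi> (c1*x - t1)))\<^sup>2 + (cmod (\<phi> (c2*x - t2)))\<^sup>2)"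
      by (simp add: norm_mult)
  qed
qed

lemma ortho_scaled:
  fixes c :: real assumes c: "c > 0"
  shows "(\<integral>x. \<phi> (c*x - of_int j) * cnj (\<phi> (c*x - of_int k)) \<partial>lborel) = (if j = k then 1 / c else 0)"
proof -
  have "(\<integral>y. \<phi> (y - of_int j) * cnj (\<phi> (y - of_int k)) \<partial>lborel)
     = \<bar>c\<bar> *\<^sub>R (\<integral>x. \<phi> (0 + c*x - of_int j) * cnj (\<phi> (0 + c*x - of_int k)) \<partial>lborel)"
    using lborel_integral_real_affine[of c "\<lambda>y. \<phi> (y - of_int j) * cnj (\<phi> (y - of_int k))" 0] c by simp
  then have "(if j = k then 1 else 0) = c *\<^sub>R (\<integral>x. \<phi> (c*x - of_int j) * cnj (\<phi> (c*x - of_int k)) \<partial>lborel)"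
    using ortho c by simp
  then show ?thesis using c by (auto simp: scaleR_conv_of_real field_simps)
qed

lemma casc_integral:
  assumes k: "k \<in> SL a b L"
  shows "casc h a b L k = of_real (sqrt 2) ^ L * (\<integral>x. \<phi> x * cnj (\<phi> (2^L*x - of_int k)) \<partial>lborel)"
proof -
  define c :: real where "c = 2^L"
  have c: "c > 0" by (simp add: c_def)
  have "(\<integral>x. \<phi> x * cnj (\<phi> (2^L*x - of_int k)) \<partial>lborel)
      = (\<integral>x. of_real (sqrt 2) ^ L * (\<Sum>j\<in>SL a b L. casc h a b L j * (\<phi> (c*x - of_int j) * cnj (\<phi> (c*x - of_int k)))) \<partial>lborel)"
    apply (rule integral_cong_AE)
      apply measurable
    using cascade[of L] unfolding c_def
    by eventually_elim (simp add: sum_distrib_right mult.assoc)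
  also have "\<dots> = of_real (sqrt 2) ^ L * (\<Sum>j\<in>SL a b L. casc h a b L j * (\<integral>x. \<phi> (c*x - of_int j) * cnj (\<phi> (c*x - of_int k)) \<partial>lborel))"
  proof -
    have pi: "\<And>j. integrable lborel (\<lambda>x. casc h a b L j * (\<phi> (c*x - of_int j) * cnj (\<phi> (c*x - of_int k))))"
      using prod_integrable c by auto
    show ?thesis by (simp add: pi)
  qed
  also have "\<dots> = of_real (sqrt 2) ^ L * (casc h a b L k / c)"
    using k by (simp add: ortho_scaled[OF c] if_distrib sum.delta cong: if_cong)
  finally have "of_real (sqrt 2) ^ L * (\<integral>x. \<phi> x * cnj (\<phi> (2^L*x - of_int k)) \<partial>lborel)
     = (of_real (sqrt 2) ^ L * of_real (sqrt 2) ^ L) * casc h a b L k / c" by simp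
  also have "(of_real (sqrt 2) ^ L * of_real (sqrt 2) ^ L :: complex) = of_real c"
    by (simp add: c_def power_mult_distrib[symmetric] of_real_mult[symmetric] del: of_real_mult)
  finally show ?thesis using c by simp
qed

lemma affine_norm_integral:
  fixes c :: real assumes c: "c > 0"
  shows "(\<integral>x. cmod (\<phi> (c*x - t)) \<partial>lborel) = (\<integral>y. cmod (\<phi> y) \<partial>lborel) / c"
  using lborel_integral_real_affine[of c "\<lambda>y. cmod (\<phi> y)" "-t"] c by (simp add: algebra_simps)

lemma casc_bound:
  assumes k: "k \<in> SL a b L"
  shows "cmod (casc h a b L k) \<le> B * (\<integral>y. cmod (\<phi> y) \<partial>lborel) / sqrt 2 ^ L"
proof -
  define c :: real where "c = 2^L"
  have c: "c > 0" by (simp add: c_def)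
  have i1: "integrable lborel (\<lambda>x. \<phi> x * cnj (\<phi> (c*x - of_int k)))"
    using prod_integrable[of 1 c 0 "of_int k"] c by simp
  have "cmod (\<integral>x. \<phi> x * cnj (\<phi> (c*x - of_int k)) \<partial>lborel) \<le> (\<integral>x. cmod (\<phi> x * cnj (\<phi> (c*x - of_int k))) \<partial>lborel)"
    by (rule integral_norm_bound)
  also have "\<dots> \<le> (\<integral>x. B * cmod (\<phi> (c*x - of_int k)) \<partial>lborel)"
  proof (rule integral_mono_AE)
    show "integrable lborel (\<lambda>x. cmod (\<phi> x * cnj (\<phi> (c*x - of_int k))))" using i1 by auto
    show "integrable lborel (\<lambda>x. B * cmod (\<phi> (c*x - of_int k)))" using affine_integrable c by auto
    show "AE x in lborel. cmod (\<phi> x * cnj (\<phi> (c*x - of_int k))) \<le> B * cmod (\<phi> (c*x - of_int k))"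
      using bnd by eventually_elim (simp add: norm_mult mult_right_mono)
  qed
  also have "\<dots> = B * (\<integral>y. cmod (\<phi> y) \<partial>lborel) / c"
    using affine_norm_integral[OF c] by simp
  finally have *: "cmod (\<integral>x. \<phi> x * cnj (\<phi> (c*x - of_int k)) \<partial>lborel) \<le> B * (\<integral>y. cmod (\<phi> y) \<partial>lborel) / c" .
  have "cmod (casc h a b L k) = sqrt 2 ^ L * cmod (\<integral>x. \<phi> x * cnj (\<phi> (c*x - of_int k)) \<partial>lborel)"
    using casc_integral[OF k] by (simp add: norm_mult norm_power c_def)
  also have "\<dots> \<le> sqrt 2 ^ L * (B * (\<integral>y. cmod (\<phi> y) \<partial>lborel) / c)"
    by (rule mult_left_mono[OF *]) simp
  also have "\<dots> = B * (\<integral>y. cmod (\<phi> y) \<partial>lborel) / sqrt 2 ^ L"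
  proof -
    have "c = sqrt 2 ^ L * sqrt 2 ^ L" by (simp add: c_def power_mult_distrib[symmetric])
    then show ?thesis by (simp add: field_simps)
  qed
  finally show ?thesis .
qed


lemma tail_pt: "(\<lambda>L. indicator (TT a b L) y * cmod (\<phi> y)) \<longlonglongrightarrow> 0"
proof -
  obtain N where N: "2 * (\<bar>y\<bar> + \<bar>of_int a\<bar> + \<bar>of_int b\<bar>) < (2::real)^N"
    using real_arch_pow[of 2] by auto
  have "\<forall>L\<ge>N. indicator (TT a b L) y * cmod (\<phi> y) = 0"
  proof (intro allI impI)
    fix L assume "L \<ge> N"
    then have *: "(2::real)^N \<le> 2^L" by (simp add: power_increasing)
    have "y \<notin> TT a b L" unfolding TT_def mem_Collect_eq using aux_abs[OF N *] .
    then show "indicator (TT a b L) y * cmod (\<phi> y) = 0" by simp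
  qed
  then show ?thesis
    by (intro tendsto_eventually) (auto simp: eventually_sequentially)
qed

lemma tail_lim: "(\<lambda>L. \<integral>y. indicator (TT a b L) y * cmod (\<phi> y) \<partial>lborel) \<longlonglongrightarrow> 0"
proof -
  note * = Bochner_Integration.integral_dominated_convergence[where w="\<lambda>y. cmod (\<phi> y)" and f="\<lambda>y. 0::real" and M=lborel
    and s="\<lambda>L y. indicator (TT a b L) y * cmod (\<phi> y)"]
  show ?thesis
    apply (rule *[simplified])
    using L1 tail_pt by (auto simp: indicator_def)
qed

lemma TT_shift:
  assumes x: "x \<in> TT a b 0" and j: "j \<in> SL a b L"
  shows "2^L * x - of_int j \<in> TT a b L"
proof -
  define c :: real where "c = 2^L"
  have c: "c \<ge> 1" by (simp add: c_def)
  have ji: "a*(2^L-1) \<le> j" "j \<le> b*(2^L-1)" using j unfolding SL_def by auto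
  have "real_of_int (a*(2^L-1)) \<le> real_of_int j" "real_of_int j \<le> real_of_int (b*(2^L-1))"
    using ji by (simp_all only: of_int_le_iff)
  then have j1: "of_int a * (c - 1) \<le> of_int j" "of_int j \<le> of_int b * (c - 1)"
    unfolding c_def by simp_all
  from x have "x < of_int a - 1/2 \<or> of_int b + 1/2 < x" by (simp add: TT_def)
  then have "c * x - of_int j < of_int a - c/2 \<or> of_int b + c/2 < c * x - of_int j"
  proof
    assume "x < of_int a - 1/2"
    then have "c * x < c * (of_int a - 1/2)" using c by (intro mult_strict_left_mono) auto
    then show ?thesis using j1 by (simp add: algebra_simps)
  next
    assume "of_int b + 1/2 < x"
    then have "c * (of_int b + 1/2) < c * x" using c by (intro mult_strict_left_mono) auto
    then show ?thesis using j1 by (simp add: algebra_simps)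
  qed
  then show ?thesis by (simp add: TT_def c_def)
qed

lemma g_integrable: "integrable lborel (\<lambda>y. indicator (TT a b L) y * cmod (\<phi> y))"
  apply (rule Bochner_Integration.integrable_bound[where f="\<lambda>y. cmod (\<phi> y)"])
  using L1 by (auto simp: indicator_def)

lemma E_bound:
  "(\<integral>x. indicator (TT a b 0) x * cmod (\<phi> x) \<partial>lborel)
     \<le> real_of_int (b - a + 1) * B * (\<integral>y. cmod (\<phi> y) \<partial>lborel) * (\<integral>y. indicator (TT a b L) y * cmod (\<phi> y) \<partial>lborel)"
proof -
  define c :: real where "c = 2^L"
  have c: "c > 0" by (simp add: c_def)
  define N1 where "N1 = (\<integral>y. cmod (\<phi> y) \<partial>lborel)"
  define t where "t = (\<integral>y. indicator (TT a b L) y * cmod (\<phi> y) \<partial>lborel)"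
  have N1: "N1 \<ge> 0" unfolding N1_def by simp
  have t: "t \<ge> 0" unfolding t_def by simp
  let ?G = "\<lambda>j x. indicator (TT a b L) (c*x - of_int j) * cmod (\<phi> (c*x - of_int j))"
  have Gint: "integrable lborel (?G j)" for j
    using lborel_integrable_real_affine[OF g_integrable[of L], of c "- of_int j"] c by (simp add: algebra_simps)
  have Gi: "(\<integral>x. ?G j x \<partial>lborel) = t / c" for j
    using lborel_integral_real_affine[of c "\<lambda>y. indicator (TT a b L) y * cmod (\<phi> y)" "- of_int j"] c
    by (simp add: t_def algebra_simps)
  have "(\<integral>x. indicator (TT a b 0) x * cmod (\<phi> x) \<partial>lborel)
      \<le> (\<integral>x. sqrt 2 ^ L * (\<Sum>j\<in>SL a b L. cmod (casc h a b L j) * ?G j x) \<partial>lborel)"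
  proof (rule integral_mono_AE)
    show "integrable lborel (\<lambda>x. indicator (TT a b 0) x * cmod (\<phi> x))" by (rule g_integrable)
    show "integrable lborel (\<lambda>x. sqrt 2 ^ L * (\<Sum>j\<in>SL a b L. cmod (casc h a b L j) * ?G j x))"
      using Gint by auto
    show "AE x in lborel. indicator (TT a b 0) x * cmod (\<phi> x) \<le> sqrt 2 ^ L * (\<Sum>j\<in>SL a b L. cmod (casc h a b L j) * ?G j x)"
      using cascade[of L]
    proof eventually_elim
      case (elim x)
      have "cmod (\<phi> x) \<le> sqrt 2 ^ L * (\<Sum>j\<in>SL a b L. cmod (casc h a b L j) * cmod (\<phi> (c*x - of_int j)))"
      proof -
        have "cmod (\<phi> x) = sqrt 2 ^ L * cmod (\<Sum>j\<in>SL a b L. casc h a b L j * \<phi> (c*x - of_int j))"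
          using elim by (simp add: norm_mult norm_power c_def)
        also have "\<dots> \<le> sqrt 2 ^ L * (\<Sum>j\<in>SL a b L. cmod (casc h a b L j * \<phi> (c*x - of_int j)))"
          by (intro mult_left_mono norm_sum) auto
        finally show ?thesis by (simp add: norm_mult)
      qed
      show ?case
      proof (cases "x \<in> TT a b 0")
        case True
        then have "\<And>j. j \<in> SL a b L \<Longrightarrow> c*x - of_int j \<in> TT a b L"
          using TT_shift unfolding c_def by blast
        then have "(\<Sum>j\<in>SL a b L. cmod (casc h a b L j) * ?G j x) = (\<Sum>j\<in>SL a b L. cmod (casc h a b L j) * cmod (\<phi> (c*x - of_int j)))"
          by (intro sum.cong) auto
        then show ?thesis using True \<open>cmod (\<phi> x) \<le> _\<close> by simp
      next
        case False
        then show ?thesis by (auto intro!: sum_nonneg mult_nonneg_nonneg simp: indicator_def)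
      qed
    qed
  qed
  also have "\<dots> = sqrt 2 ^ L * (\<Sum>j\<in>SL a b L. cmod (casc h a b L j) * (t / c))"
    using Gint by (simp add: Gi)
  also have "\<dots> \<le> sqrt 2 ^ L * (\<Sum>j\<in>SL a b L. (B * N1 / sqrt 2 ^ L) * (t / c))"
    using casc_bound t c unfolding N1_def
    by (intro mult_left_mono sum_mono mult_right_mono) auto
  also have "\<dots> = real (card (SL a b L)) * B * N1 * t / c"
    by (simp add: field_simps)
  also have "\<dots> \<le> real_of_int (b - a + 1) * B * N1 * t"
  proof -
    have "real (card (SL a b L)) = real_of_int (b*(2^L-1) - a*(2^L-1) + 1)"
      using ab by (simp add: SL_def mult_right_mono)
    also have "\<dots> = real_of_int (b - a) * (c - 1) + 1" by (simp add: c_def algebra_simps)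
    also have "\<dots> \<le> real_of_int (b - a + 1) * c"
    proof -
      have "c \<ge> 1" by (simp add: c_def)
      then show ?thesis using ab by (simp add: algebra_simps)
    qed
    finally have "real (card (SL a b L)) / c \<le> real_of_int (b - a + 1)" using c by (simp add: field_simps)
    then have "real (card (SL a b L)) / c * (B * N1 * t) \<le> real_of_int (b - a + 1) * (B * N1 * t)"
      using B0 N1 t by (intro mult_right_mono) auto
    then show ?thesis by (simp add: field_simps)
  qed
  finally show ?thesis unfolding N1_def t_def .
qed

lemma E_zero: "(\<integral>x. indicator (TT a b 0) x * cmod (\<phi> x) \<partial>lborel) \<le> 0"
proof -
  define K where "K = real_of_int (b - a + 1) * B * (\<integral>y. cmod (\<phi> y) \<partial>lborel)"
  have "(\<lambda>L. K * (\<integral>y. indicator (TT a b L) y * cmod (\<phi> y) \<partial>lborel)) \<longlonglongrightarrow> K * 0"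
    by (intro tendsto_mult tendsto_const tail_lim)
  then have "(\<integral>x. indicator (TT a b 0) x * cmod (\<phi> x) \<partial>lborel) \<le> K * 0"
    by (rule LIMSEQ_le_const) (use E_bound in \<open>auto simp: K_def\<close>)
  then show ?thesis by simp
qed

lemma L2_one: "(\<integral>x. (cmod (\<phi> x))\<^sup>2 \<partial>lborel) = 1"
proof -
  have "(\<integral>x. \<phi> x * cnj (\<phi> x) \<partial>lborel) = 1"
    using ortho[rule_format, of 0 0] by simp
  moreover have eq: "\<And>x. complex_of_real ((cmod (\<phi> x))\<^sup>2) = \<phi> x * cnj (\<phi> x)"
    using complex_norm_square by simp
  ultimately have "(\<integral>x. complex_of_real ((cmod (\<phi> x))\<^sup>2) \<partial>lborel) = 1"
    by (simp only: eq)
  then show ?thesis unfolding integral_complex_of_real by simp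
qed

lemma N1_bound: "(\<integral>x. cmod (\<phi> x) \<partial>lborel) \<le> sqrt (real_of_int (b - a + 1))"
proof -
  define W where "W = real_of_int (b - a + 1)"
  have W: "W \<ge> 1" using ab by (simp add: W_def)
  define sw where "sw = sqrt W"
  have sw: "sw > 0" using W by (simp add: sw_def)
  define I where "I = {real_of_int a - 1/2 .. real_of_int b + 1/2}"
  have Ii: "integrable lborel (indicator I :: real \<Rightarrow> real)" by (simp add: I_def integrable_indicator_iff emeasure_lborel_Icc_eq)
  have IE: "cmod (\<phi> x) = indicator I x * cmod (\<phi> x) + indicator (TT a b 0) x * cmod (\<phi> x)" for x
    by (auto simp: I_def TT_def indicator_def)
  have gi: "integrable lborel (\<lambda>x. indicator I x * cmod (\<phi> x))"
    apply (rule Bochner_Integration.integrable_bound[where f="\<lambda>y. cmod (\<phi> y)"])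
    using L1 by (auto simp: indicator_def I_def)
  have "(\<integral>x. cmod (\<phi> x) \<partial>lborel) = (\<integral>x. indicator I x * cmod (\<phi> x) \<partial>lborel) + (\<integral>x. indicator (TT a b 0) x * cmod (\<phi> x) \<partial>lborel)"
    by (subst IE) (rule Bochner_Integration.integral_add[OF gi g_integrable])
  also have "\<dots> \<le> (\<integral>x. indicator I x * cmod (\<phi> x) \<partial>lborel)" using E_zero by simp
  also have "\<dots> \<le> integral\<^sup>L lborel (\<lambda>x. (cmod (\<phi> x))\<^sup>2 * (sw/2) + indicator I x / (2 * sw))"
  proof (rule integral_mono)
    show "integrable lborel (\<lambda>x. (cmod (\<phi> x))\<^sup>2 * (sw/2) + indicator I x / (2 * sw))"
      using L2 Ii by auto
    fix x
    show "indicator I x * cmod (\<phi> x) \<le> (cmod (\<phi> x))\<^sup>2 * (sw/2) + indicator I x / (2 * sw)"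
    proof (cases "x \<in> I")
      case True
      have "0 \<le> (cmod (\<phi> x) * sw - 1)\<^sup>2" by simp
      then have "2 * (cmod (\<phi> x) * sw) \<le> (cmod (\<phi> x) * sw)\<^sup>2 + 1" by (simp add: power2_eq_square algebra_simps)
      then have "cmod (\<phi> x) \<le> (cmod (\<phi> x))\<^sup>2 * (sw/2) + 1 / (2 * sw)"
        using sw by (simp add: field_simps power2_eq_square)
      then show ?thesis using True by simp
    next
      case False
      then show ?thesis using sw by simp
    qed
  qed (use gi in auto)
  also have "\<dots> = sw/2 + W / (2 * sw)"
    using L2 Ii L2_one ab by (simp add: I_def W_def algebra_simps)
  also have "\<dots> = sw" using sw W by (simp add: sw_def field_simps)
  finally show ?thesis by (simp add: sw_def W_def)
qed

end


lemma bij_block: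
  fixes c d :: int assumes c: "c > 0"
  shows "bij_betw (\<lambda>(q,n). c*n+q) ({d..<d+c} \<times> UNIV) UNIV"
proof (rule bij_betwI[where g="\<lambda>m. (d + (m-d) mod c, (m-d) div c)"])
  show "(\<lambda>(q,n). c*n+q) \<in> {d..<d+c} \<times> UNIV \<rightarrow> UNIV" by auto
  show "(\<lambda>m. (d + (m-d) mod c, (m-d) div c)) \<in> UNIV \<rightarrow> {d..<d+c} \<times> UNIV"
    using c by (auto simp: pos_mod_bound)
  show "(\<lambda>m. (d + (m-d) mod c, (m-d) div c)) ((\<lambda>(q,n). c*n+q) x) = x" if "x \<in> {d..<d+c} \<times> UNIV" for x
  proof -
    obtain q n where x0: "x = (q,n)" by (cases x)
    have x: "x = (q,n)" "d \<le> q" "q < d + c" using that x0 by auto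
    have r: "0 \<le> q - d" "q - d < c" using x by auto
    have e: "c*n+q-d = (q-d) + n*c" by simp
    have "(c*n+q-d) mod c = q - d" unfolding e using r c by simp
    moreover have "(c*n+q-d) div c = n" unfolding e using r c by simp
    ultimately show ?thesis using x by simp
  qed
  show "(\<lambda>(q,n). c*n+q) ((\<lambda>m. (d + (m-d) mod c, (m-d) div c)) y) = y" for y
  proof -
    have "c * ((y - d) div c) + (y - d) mod c = y - d" by (rule mult_div_mod_eq)
    then show ?thesis by simp
  qed
qed

lemma summable_shift:
  fixes f :: "int \<Rightarrow> complex" and c :: int assumes fs: "(\<lambda>n. cmod (f n)) summable_on UNIV" and c: "c > 0"
  shows "(\<lambda>n. cmod (f (c*n+q))) summable_on UNIV"
proof -
  have "(\<lambda>n. cmod (f n)) summable_on range (\<lambda>n. c*n+q)"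
    by (rule summable_on_subset[OF fs]) auto
  moreover have "inj (\<lambda>n. c*n+q)" using c by (auto simp: inj_def)
  ultimately show ?thesis by (simp add: summable_on_reindex o_def)
qed

lemma block_sum:
  fixes f :: "int \<Rightarrow> complex" and c d :: int assumes fs: "(\<lambda>n. cmod (f n)) summable_on UNIV" and c: "c > 0"
  shows "(\<Sum>q\<in>{d..<d+c}. \<Sum>\<^sub>\<infinity>n. cmod (f (c*n+q))) = (\<Sum>\<^sub>\<infinity>m. cmod (f m))"
proof -
  let ?F = "\<lambda>x. cmod (f ((\<lambda>(q,n). c*n+q) x))"
  have sm: "?F summable_on ({d..<d+c} \<times> UNIV)"
    using summable_on_reindex_bij_betw[OF bij_block[OF c, of d], of "\<lambda>m. cmod (f m)"] fs
    by blast
  have "(\<Sum>q\<in>{d..<d+c}. \<Sum>\<^sub>\<infinity>n. cmod (f (c*n+q))) = infsum (\<lambda>q. \<Sum>\<^sub>\<infinity>n. cmod (f (c*n+q))) {d..<d+c}"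
    by simp
  also have "\<dots> = infsum ?F ({d..<d+c} \<times> UNIV)"
    using infsum_Sigma_banach[OF sm] by simp
  also have "\<dots> = (\<Sum>\<^sub>\<infinity>m. cmod (f m))"
    by (rule infsum_reindex_bij_betw[OF bij_block[OF c, of d]])
  finally show ?thesis .
qed

lemma infsum_fsum:
  fixes F :: "'a \<Rightarrow> 'b \<Rightarrow> real"
  assumes "finite S" "\<And>q. q \<in> S \<Longrightarrow> (\<lambda>n. F n q) summable_on A"
  shows "(\<lambda>n. \<Sum>q\<in>S. F n q) summable_on A \<and> infsum (\<lambda>n. \<Sum>q\<in>S. F n q) A = (\<Sum>q\<in>S. infsum (\<lambda>n. F n q) A)"
  using assms
proof (induction S rule: finite_induct)
  case empty
  then show ?case by simp
next
  case (insert x F')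
  then have IH: "(\<lambda>n. \<Sum>q\<in>F'. F n q) summable_on A" "infsum (\<lambda>n. \<Sum>q\<in>F'. F n q) A = (\<Sum>q\<in>F'. infsum (\<lambda>n. F n q) A)"
    by auto
  have sx: "(\<lambda>n. F n x) summable_on A" using insert by auto
  show ?case
    using insert(1,2) IH sx summable_on_add[OF sx IH(1)] infsum_add[OF sx IH(1)] by simp
qed

lemma blocks:
  fixes f :: "int \<Rightarrow> complex" and c d :: int assumes fs: "(\<lambda>n. cmod (f n)) summable_on UNIV" and c: "c > 0"
  shows "(\<Sum>q\<in>{d..<d+int K*c}. \<Sum>\<^sub>\<infinity>n. cmod (f (c*n+q))) = real K * (\<Sum>\<^sub>\<infinity>m. cmod (f m))"
proof (induction K)
  case 0
  then show ?case by simp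
next
  case (Suc K)
  have u: "{d..<d+int (Suc K)*c} = {d..<d+int K*c} \<union> {d+int K*c..<(d+int K*c)+c}"
  proof -
    have nn: "0 \<le> int K * c" using c by simp
    have "\<And>e::int. 0 \<le> e \<Longrightarrow> {d..<d+e+c} = {d..<d+e} \<union> {d+e..<d+e+c}" using c by auto
    from this[OF nn] show ?thesis by (simp add: algebra_simps)
  qed
  have "(\<Sum>q\<in>{d..<d+int (Suc K)*c}. \<Sum>\<^sub>\<infinity>n. cmod (f (c*n+q)))
      = (\<Sum>q\<in>{d..<d+int K*c}. \<Sum>\<^sub>\<infinity>n. cmod (f (c*n+q))) + (\<Sum>q\<in>{d+int K*c..<(d+int K*c)+c}. \<Sum>\<^sub>\<infinity>n. cmod (f (c*n+q)))"
    unfolding u by (rule sum.union_disjoint) auto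
  also have "\<dots> = real K * (\<Sum>\<^sub>\<infinity>m. cmod (f m)) + (\<Sum>\<^sub>\<infinity>m. cmod (f m))"
    using Suc block_sum[OF fs c] by simp
  finally show ?case by (simp add: algebra_simps)
qed

lemma l2_bound:
  fixes f g H :: "int \<Rightarrow> complex" and c d :: int and K :: nat and A :: real and S :: "int set"
  assumes fs: "(\<lambda>n. cmod (f n)) summable_on UNIV" and c: "c > 0" and A: "A \<ge> 0"
    and S: "finite S" "S \<subseteq> {d..<d + int K * c}"
    and Hb: "\<And>q. q \<in> S \<Longrightarrow> cmod (H q) \<le> A"
    and g: "\<And>n. g n = (\<Sum>q\<in>S. f (c*n+q) * cnj (H q))"
  shows "l2norm g \<le> A * sqrt (real K) * l1norm f"
proof -
  define N where "N = (\<Sum>\<^sub>\<infinity>m. cmod (f m))"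
  have N0: "N \<ge> 0" unfolding N_def by (rule infsum_nonneg) auto
  define F where "F n = (\<Sum>q\<in>S. cmod (f (c*n+q)))" for n
  have F0: "F n \<ge> 0" for n unfolding F_def by (auto intro: sum_nonneg)
  have FS: "F summable_on UNIV" "infsum F UNIV = (\<Sum>q\<in>S. \<Sum>\<^sub>\<infinity>n. cmod (f (c*n+q)))"
    using infsum_fsum[of S "\<lambda>n q. cmod (f (c*n+q))" UNIV] S summable_shift[OF fs c]
    unfolding F_def by auto
  have "infsum F UNIV \<le> (\<Sum>q\<in>{d..<d + int K * c}. \<Sum>\<^sub>\<infinity>n. cmod (f (c*n+q)))"
    unfolding FS(2) by (rule sum_mono2) (use S in \<open>auto intro: infsum_nonneg\<close>)
  also have "\<dots> = real K * N" unfolding N_def by (rule blocks[OF fs c])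
  finally have FK: "infsum F UNIV \<le> real K * N" .
  have FN: "F n \<le> N" for n
  proof -
    have inj: "inj_on (\<lambda>q. c*n+q) S" by (auto simp: inj_on_def)
    have "F n = (\<Sum>m\<in>(\<lambda>q. c*n+q) ` S. cmod (f m))"
      unfolding F_def by (subst sum.reindex[OF inj]) simp
    also have "\<dots> \<le> N" unfolding N_def
      by (rule finite_sum_le_infsum[OF fs]) (use S in auto)
    finally show ?thesis .
  qed
  have gb: "cmod (g n) \<le> A * F n" for n
  proof -
    have "cmod (g n) \<le> (\<Sum>q\<in>S. cmod (f (c*n+q) * cnj (H q)))" unfolding g by (rule norm_sum)
    also have "\<dots> \<le> (\<Sum>q\<in>S. cmod (f (c*n+q)) * A)"
      by (rule sum_mono) (auto simp: norm_mult intro!: mult_left_mono Hb)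
    finally show ?thesis by (simp add: F_def sum_distrib_left mult.commute)
  qed
  have g2: "(cmod (g n))\<^sup>2 \<le> (A\<^sup>2 * N) * F n" for n
  proof -
    have "(cmod (g n))\<^sup>2 \<le> (A * F n)\<^sup>2" using gb[of n] by (intro power_mono) auto
    also have "\<dots> = A\<^sup>2 * (F n * F n)" by (simp add: power2_eq_square)
    also have "\<dots> \<le> A\<^sup>2 * (N * F n)" using FN[of n] F0[of n] by (intro mult_left_mono mult_right_mono) auto
    finally show ?thesis by simp
  qed
  have s2: "(\<lambda>n. (A\<^sup>2 * N) * F n) summable_on UNIV" using FS(1) by (rule summable_on_cmult_right)
  have s1: "(\<lambda>n. (cmod (g n))\<^sup>2) summable_on UNIV"
    by (rule summable_on_comparison_test[OF s2]) (use g2 in auto)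
  have "(\<Sum>\<^sub>\<infinity>n. (cmod (g n))\<^sup>2) \<le> (\<Sum>\<^sub>\<infinity>n. (A\<^sup>2 * N) * F n)"
    by (rule infsum_mono[OF s1 s2]) (use g2 in auto)
  also have "\<dots> = (A\<^sup>2 * N) * infsum F UNIV" by (rule infsum_cmult_right[OF FS(1)])
  also have "\<dots> \<le> (A\<^sup>2 * N) * (real K * N)" using FK N0 by (intro mult_left_mono) auto
  also have "\<dots> = (A * sqrt (real K) * N)\<^sup>2" by (simp add: power2_eq_square power_mult_distrib)
  finally have "sqrt (\<Sum>\<^sub>\<infinity>n. (cmod (g n))\<^sup>2) \<le> sqrt ((A * sqrt (real K) * N)\<^sup>2)"
    by (rule real_sqrt_le_mono)
  also have "\<dots> = A * sqrt (real K) * N" using A N0 by simp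
  finally show ?thesis by (simp add: l2norm_def l1norm_def N_def)
qed



lemma not_AE_False: "\<not> (AE x in (lborel :: real measure). False)"
proof
  assume "AE x in (lborel :: real measure). False"
  then have "ae_filter (lborel :: real measure) = bot" by (simp add: eventually_False)
  then show False by (simp add: ae_filter_eq_bot_iff)
qed

theorem lemma1:
  fixes h :: "int \<Rightarrow> complex" and M :: nat and \<phi> :: "real \<Rightarrow> complex"
    and L :: nat and f :: "int \<Rightarrow> complex"
  assumes "scaling_filter h M \<phi>"
    and "sup_norm_ess \<phi> < \<infinity>"
    and "L \<ge> 1"
    and "(\<lambda>n. cmod (f n)) summable_on UNIV"
  shows "l2norm (scaling_output h L f)
           \<le> real M * 2 powr (- (real L - 1) / 2) * real_of_ereal (sup_norm_ess \<phi>) * l1norm f"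
proof -
  note sf = assms(1)[unfolded scaling_filter_def]
  obtain a where a: "\<And>n. h n \<noteq> 0 \<Longrightarrow> a \<le> n \<and> n < a + int M"
    using sf unfolding supported_len_def by blast
  have M1: "M \<ge> 1"
  proof (rule ccontr)
    assume "\<not> M \<ge> 1"
    then have "M = 0" by simp
    then have "\<And>n. h n = 0" using a by force
    then have "filter_ft h 0 = 0" by (simp add: filter_ft_def)
    moreover have "filter_ft h 0 = of_real (sqrt 2)" using sf by blast
    ultimately show False by simp
  qed
  define b where "b = a + int M - 1"
  have hs: "\<And>n. h n \<noteq> 0 \<Longrightarrow> a \<le> n \<and> n \<le> b" using a unfolding b_def by force
  have ab: "a \<le> b" using M1 by (simp add: b_def)
  have Mb: "b - a + 1 = int M" by (simp add: b_def)
  have isf: "is_scaling_function h \<phi>" using sf by blast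
  have L2: "integrable lborel (\<lambda>x. (cmod (\<phi> x))\<^sup>2)" and L1: "integrable lborel \<phi>"
    and refine: "AE x in lborel. \<phi> x = of_real (sqrt 2) * (\<Sum>\<^sub>\<infinity>n. h n * \<phi> (2 * x - of_int n))"
    and ortho: "\<forall>m n :: int. (\<integral>x. \<phi> (x - of_int m) * cnj (\<phi> (x - of_int n)) \<partial>lborel)
                     = (if m = n then 1 else 0)"
    using isf unfolding is_scaling_function_def by blast+
  define B where "B = real_of_ereal (sup_norm_ess \<phi>)"
  have ae: "AE x in lborel. ereal (cmod (\<phi> x)) \<le> sup_norm_ess \<phi>"
    unfolding sup_norm_ess_def by (rule esssup_AE)
  have ninf: "sup_norm_ess \<phi> \<noteq> - \<infinity>"
  proof
    assume "sup_norm_ess \<phi> = - \<infinity>"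
    with ae have "AE x in (lborel::real measure). False" by simp
    then show False using not_AE_False by simp
  qed
  have eB: "sup_norm_ess \<phi> = ereal B"
    using ninf assms(2) unfolding B_def by (cases "sup_norm_ess \<phi>") auto
  have bnd: "AE x in lborel. cmod (\<phi> x) \<le> B" using ae unfolding eB by simp
  have B0: "B \<ge> 0"
  proof (rule ccontr)
    assume nb: "\<not> B \<ge> 0"
    from bnd have "AE x in (lborel::real measure). False"
    proof eventually_elim
      case (elim x)
      then show False using nb norm_ge_zero[of "\<phi> x"] by linarith
    qed
    then show False using not_AE_False by simp
  qed
  have Hb: "cmod (casc h a b L k) \<le> B * sqrt (real M) / sqrt 2 ^ L" if k: "k \<in> SL a b L" for k
  proof -
    have "cmod (casc h a b L k) \<le> B * (\<integral>y. cmod (\<phi> y) \<partial>lborel) / sqrt 2 ^ L"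
      by (rule casc_bound[OF hs L2 L1 refine ortho bnd B0 ab k])
    also have "\<dots> \<le> B * sqrt (real M) / sqrt 2 ^ L"
    proof -
      have "(\<integral>y. cmod (\<phi> y) \<partial>lborel) \<le> sqrt (real_of_int (b - a + 1))"
        by (rule N1_bound[OF hs L2 L1 refine ortho bnd B0 ab])
      then have "(\<integral>y. cmod (\<phi> y) \<partial>lborel) \<le> sqrt (real M)" unfolding Mb by simp
      then show ?thesis using B0 by (intro divide_right_mono mult_left_mono) auto
    qed
    finally show ?thesis .
  qed
  define c :: int where "c = 2^L"
  have c: "c > 0" by (simp add: c_def)
  have Ssub: "SL a b L \<subseteq> {a*(c-1) ..< a*(c-1) + int M * c}"
  proof
    fix q assume "q \<in> SL a b L"
    then have q: "a*(c-1) \<le> q" "q \<le> b*(c-1)" by (auto simp: SL_def c_def)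
    have "b*(c-1) = a*(c-1) + (int M - 1)*(c-1)" by (simp add: b_def algebra_simps)
    also have "(int M - 1)*(c-1) < int M * c"
    proof -
      have "(int M - 1)*(c-1) = int M * c - (int M + c - 1)" by (simp add: algebra_simps)
      moreover have "int M + c - 1 > 0" using M1 c by simp
      ultimately show ?thesis by simp
    qed
    finally show "q \<in> {a*(c-1) ..< a*(c-1) + int M * c}" using q by simp
  qed
  have A0: "B * sqrt (real M) / sqrt 2 ^ L \<ge> 0" using B0 by simp
  have "l2norm (scaling_output h L f) \<le> (B * sqrt (real M) / sqrt 2 ^ L) * sqrt (real M) * l1norm f"
  proof -
    have geq: "\<And>n. scaling_output h L f n = (\<Sum>q\<in>SL a b L. f (c*n+q) * cnj (casc h a b L q))"
      unfolding c_def by (rule out_eq[OF hs])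
    show ?thesis by (rule l2_bound[OF assms(4) c A0 finite_SL Ssub Hb geq])
  qed
  also have "\<dots> = real M * (1 / sqrt 2 ^ L) * B * l1norm f" by simp
  also have "\<dots> \<le> real M * 2 powr (- (real L - 1) / 2) * B * l1norm f"
  proof -
    have l1: "l1norm f \<ge> 0" unfolding l1norm_def by (rule infsum_nonneg) auto
    have h: "(2::real) powr (1/2) = sqrt 2" by (rule powr_half_sqrt) simp
    have "(2::real) powr (real L / 2) = (2 powr (1/2)) powr real L" by (simp only: powr_powr) simp
    also have "\<dots> = (2 powr (1/2)) ^ L" by (rule powr_realpow) simp
    finally have e: "sqrt 2 ^ L = 2 powr (real L / 2)" unfolding h ..
    have "1 / sqrt 2 ^ L = inverse (2 powr (real L / 2))" unfolding e by (simp only: divide_inverse mult_1)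
    also have "\<dots> = 2 powr (- (real L / 2))" by (rule powr_minus[symmetric])
    also have "\<dots> \<le> 2 powr (- (real L - 1) / 2)" by (rule powr_mono) (auto simp: field_simps)
    finally have P: "1 / sqrt 2 ^ L \<le> 2 powr (- (real L - 1) / 2)" .
    have "real M * (1 / sqrt 2 ^ L) * (B * l1norm f) \<le> real M * 2 powr (- (real L - 1) / 2) * (B * l1norm f)"
      using B0 l1 P by (intro mult_right_mono mult_left_mono) auto
    then show ?thesis by (simp only: mult.assoc)
  qed
  finally show ?thesis unfolding B_def .
qed


end
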